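(* Let $X$ be a supertropical semiring. (1) With its intrinsic order, $X$ is a bounded join-semilattice, with $\sup\emptyset=0$ and, for $x,y\in X$, $\sup\{x,y\}=x+y$ if $x\ne y$ and $\sup\{x,y\}=x$ if $x=y$. (2) Let $n\in\mathbb{N}$, $a_1,\dots,a_n\in X$, $s=a_1+\dots+a_n$ and $M=\sup\{a_1,\dots,a_n\}$. Then $s\notin\nu X$ if and only if $M\notin\nu X$ and there is exactly one $i\in\{1,\dots,n\}$ with $a_i=M$, if and only if $M\notin\nu X$ and there is exactly one $i\in\{1,\dots,n\}$ with $a_i=M=s$.
   Context: A semiring $(X,+,0,\cdot)$: $(X,+,0)$ commutative monoid, $(X,\cdot)$ semigroup, distributivity, $0$ absorbing. Intrinsic order: $a\le b$ iff $a+x=b$ for some $x$. $\nu(x)=x+x$; $\nu X=\{a: a=a+a\}$. A supertropical semiring is a unital commutative semiring with $2=4$ (where $n=1+\dots+1$), such that $a+b\in\{a,b\}$ whenever $\nu(a)\ne\nu(b)$, and $a+b=\nu(a)$ whenever $\nu(a)=\nu(b)$. A bounded join-semilattice is a partial order in which every finite subset has a least upper bound. *)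

theory Defs
  imports Main
begin

text \<open>Unital commutative semiring in the sense of the paper: commutative additive monoid,
commutative multiplicative monoid, distributivity, 0 absorbing (no requirement 0 \<noteq> 1).\<close>

definition nu :: "'a::plus \<Rightarrow> 'a" where
  "nu x = x + x"

definition nuX :: "'a::plus set" where
  "nuX = {a. a = a + a}"

class supertropical = comm_semiring_0 + comm_monoid_mult +
  assumes two_eq_four: "(1 + 1 :: 'a) = 1 + 1 + 1 + 1"
  and add_distinct_nu: "a + a \<noteq> b + b \<Longrightarrow> a + b = a \<or> a + b = b"
  and add_equal_nu: "a + a = b + b \<Longrightarrow> a + b = a + a"

lemma (in supertropical) "nu a = a + a" by (simp add: nu_def)

definition ile :: "'a::plus \<Rightarrow> 'a \<Rightarrow> bool" where
  "ile a b \<longleftrightarrow> (\<exists>x. a + x = b)"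

definition ile_rel :: "('a::plus \<times> 'a) set" where
  "ile_rel = {(a, b). ile a b}"

definition is_ilub :: "'a::plus set \<Rightarrow> 'a \<Rightarrow> bool" where
  "is_ilub A m \<longleftrightarrow> (\<forall>a\<in>A. ile a m) \<and> (\<forall>u. (\<forall>a\<in>A. ile a u) \<longrightarrow> ile m u)"

end

theory Submission
  imports Defs
begin

lemma st_four: "(a::'a::supertropical) + a + a + a = a + a"
proof -
  have "a * (1 + 1) = a * (1 + 1 + 1 + 1)" using two_eq_four by metis
  thus ?thesis by (simp add: distrib_left add.assoc)
qed

lemma st_nuidem: "((a::'a::supertropical) + a) + (a + a) = a + a"
  using st_four[of a] by (simp add: add.assoc)

lemma st_three: "(a::'a::supertropical) + (a + a) = a + a"
  using add_equal_nu[of a "a+a"] st_nuidem[of a] by metis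

lemma st_tri: "((a::'a::supertropical) + a \<noteq> x + x \<and> (a + x = a \<or> a + x = x))
   \<or> (a + a = x + x \<and> a + x = a + a)"
  using add_distinct_nu add_equal_nu by blast

lemma ile_refl: "ile a (a::'a::supertropical)"
  unfolding ile_def by (rule exI[of _ 0]) simp

lemma ile_trans: "ile a b \<Longrightarrow> ile b c \<Longrightarrow> ile a (c::'a::supertropical)"
  unfolding ile_def by (metis add.assoc)

lemma nu_add: "((a::'a::supertropical) + b) + (a + b) = (a + a) + (b + b)"
  by (simp add: add_ac)

lemma ile_antisym:
  assumes "(a::'a::supertropical) + x = b" "b + y = a" shows "a = b"
proof -
  consider "a + x = a" | "a + a \<noteq> x + x" "a + x = x" | "a + a = x + x" "a + x = a + a"
    using st_tri[of a x] by blast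
  then show ?thesis
  proof cases
    case 1 then show ?thesis using assms by simp
  next
    case 2
    then have bx: "b = x" using assms by simp
    consider "x + y = x" | "x + y = y" | "x + y = x + x"
      using st_tri[of x y] by blast
    then show ?thesis
    proof cases
      case 1 then show ?thesis using assms bx by simp
    next
      case 2 then show ?thesis using assms bx by (simp add: add.commute)
    next
      case 3
      then have "a = x + x" using assms bx by simp
      then have "a + x = a" using st_three[of x] by (simp add: add_ac)
      then show ?thesis using assms by simp
    qed
  next
    case 3
    then have bb: "b = a + a" using assms by simp
    have nb: "b + b = a + a" using bb st_nuidem[of a] by simp
    consider "b + b \<noteq> y + y" "b + y = b" | "b + b \<noteq> y + y" "b + y = y" | "b + b = y + y" "b + y = b + b"
      using st_tri[of b y] by blast
    then show ?thesis
    proof cases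
      case 1 then show ?thesis using assms by simp
    next
      case 2 then have "a = y" using assms by simp
      then show ?thesis using 2 nb by simp
    next
      case 3 then show ?thesis using assms nb bb by simp
    qed
  qed
qed

lemma ile_antisym': "ile a b \<Longrightarrow> ile b a \<Longrightarrow> a = (b::'a::supertropical)"
  unfolding ile_def using ile_antisym by blast

lemma ilub_unique: "is_ilub A m \<Longrightarrow> is_ilub A m' \<Longrightarrow> m = (m'::'a::supertropical)"
  unfolding is_ilub_def by (meson ile_antisym')

lemma ghost_le:
  assumes xy: "x \<noteq> y" "(x::'a::supertropical) + x = y + y" and p: "x + p = u" and q: "y + q = u"
  shows "(x + x) + u = u"
proof -
  consider "x + p = x" | "x + x \<noteq> p + p" "x + p = p" | "x + p = x + x"
    using st_tri[of x p] by blast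
  then show ?thesis
  proof cases
    case 1
    then have ux: "u = x" using p by simp
    consider "y + q = y" | "y + y \<noteq> q + q" "y + q = q" | "y + q = y + y"
      using st_tri[of y q] by blast
    then show ?thesis
    proof cases
      case 1 then show ?thesis using q ux xy by simp
    next
      case 2 then show ?thesis using q ux xy by simp
    next
      case 3 then have "x = x + x" using q ux xy by simp
      then show ?thesis using ux by simp
    qed
  next
    case 2
    then have up: "u = p" using p by simp
    have e1: "(x + p) + (x + p) = (x + x) + (p + p)" by (simp add: add_ac)
    have e2: "((x + x) + p) + ((x + x) + p) = (x + x) + (p + p)"
      using st_nuidem[of x] by (metis add.assoc add.commute)
    consider "(x+x) + p = x + x" "(x+x)+(x+x) \<noteq> p + p" | "(x+x) + p = p" | "(x+x)+(x+x) = p+p"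
      using st_tri[of "x+x" p] by blast
    then show ?thesis
    proof cases
      case 1 then show ?thesis using 2 e1 e2 st_nuidem[of x] by metis
    next
      case 2 then show ?thesis using up by simp
    next
      case 3 then show ?thesis using 2 st_nuidem[of x] by simp
    qed
  next
    case 3 then show ?thesis using p st_nuidem[of x] by simp
  qed
qed

lemma ilub2: "is_ilub {x, y} (if x \<noteq> y then x + y else (x::'a::supertropical))"
proof (cases "x = y")
  case True then show ?thesis by (simp add: is_ilub_def ile_refl)
next
  case False
  have ub: "ile x (x + y)" "ile y (x + y)" unfolding ile_def by (auto simp: add.commute)
  have least: "ile (x + y) u" if xu: "ile x u" and yu: "ile y u" for u
  proof -
    obtain p q where p: "x + p = u" and q: "y + q = u" using xu yu unfolding ile_def by blast
    consider "x + y = x" | "x + y = y" | "x + x = y + y" "x + y = x + x"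
      using st_tri[of x y] by blast
    then show ?thesis
    proof cases
      case 1 then show ?thesis using xu by simp
    next
      case 2 then show ?thesis using yu by simp
    next
      case 3 then show ?thesis using ghost_le[OF False 3(1) p q] unfolding ile_def by metis
    qed
  qed
  show ?thesis unfolding is_ilub_def using False ub least by auto
qed

lemma ilub_insert:
  assumes "is_ilub A m" "is_ilub {b, m} l" shows "is_ilub (insert b A) (l::'a::supertropical)"
proof -
  have m1: "\<forall>a\<in>A. ile a m" and m2: "\<And>u. (\<forall>a\<in>A. ile a u) \<Longrightarrow> ile m u"
    using assms(1) unfolding is_ilub_def by auto
  have l1: "ile b l" "ile m l" and l2: "\<And>u. ile b u \<Longrightarrow> ile m u \<Longrightarrow> ile l u"
    using assms(2) unfolding is_ilub_def by auto
  have "\<forall>a\<in>insert b A. ile a l" using m1 l1 ile_trans by blast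
  moreover have "ile l u" if "\<forall>a\<in>insert b A. ile a u" for u
    using that m2 l2 by simp
  ultimately show ?thesis unfolding is_ilub_def by blast
qed

lemma ilub_empty: "is_ilub {} (0::'a::supertropical)"
  unfolding is_ilub_def ile_def by simp

lemma ilub_exists: "finite A \<Longrightarrow> \<exists>m. is_ilub A (m::'a::supertropical)"
proof (induction A rule: finite_induct)
  case empty then show ?case using ilub_empty by blast
next
  case (insert b A)
  then obtain m where "is_ilub A m" by blast
  then show ?case using ilub_insert ilub2 by blast
qed

lemma part1: "partial_order_on (UNIV :: 'a::supertropical set) ile_rel"
proof -
  have "refl_on UNIV (ile_rel :: ('a \<times> 'a) set)"
    unfolding refl_on_def ile_rel_def using ile_refl by blast
  moreover have "trans (ile_rel :: ('a \<times> 'a) set)"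
    unfolding trans_def ile_rel_def using ile_trans by fast
  moreover have "antisym (ile_rel :: ('a \<times> 'a) set)"
    unfolding antisym_def ile_rel_def using ile_antisym' by fast
  ultimately show ?thesis unfolding partial_order_on_def preorder_on_def by simp
qed

lemma nuX_iff: "x \<in> nuX \<longleftrightarrow> x = x + x"
  by (simp add: nuX_def)

definition INV :: "'a::supertropical \<Rightarrow> nat \<Rightarrow> 'a \<Rightarrow> bool" where
  "INV s c M \<longleftrightarrow> (M \<in> nuX \<longrightarrow> s = M) \<and> (M \<notin> nuX \<longrightarrow> c \<ge> 1 \<and> (c = 1 \<longrightarrow> s = M) \<and> (c \<noteq> 1 \<longrightarrow> s = M + M))"

lemma INV_s: "INV s c M \<Longrightarrow> s = M \<or> s = M + M"
  unfolding INV_def by blast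

lemma INV_A: assumes "INV s c M" shows "INV (s + M) (c + 1) M"
proof (cases "M \<in> nuX")
  case True
  then have "s = M" "M = M + M" using assms unfolding INV_def nuX_iff by auto
  then show ?thesis using True unfolding INV_def by simp
next
  case False
  then have c: "c \<ge> 1" "c = 1 \<longrightarrow> s = M" "c \<noteq> 1 \<longrightarrow> s = M + M" using assms unfolding INV_def by auto
  have "s + M = M + M"
  proof (cases "c = 1")
    case True then show ?thesis using c by simp
  next
    case False then show ?thesis using c st_three[of M] by (simp add: add_ac)
  qed
  then show ?thesis using False c unfolding INV_def by simp
qed

lemma INV_B1: assumes "INV s c M" "M + b = M" shows "INV (s + b) c M"
proof -
  have "s + b = s"
  proof (cases "s = M")
    case True then show ?thesis using assms(2) by simp
  next
    case False then have "s = M + M" using INV_s[OF assms(1)] by blast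
    then have "s + b = M + (M + b)" by (simp add: add.assoc)
    then show ?thesis using assms(2) \<open>s = M + M\<close> by simp
  qed
  then show ?thesis using assms(1) by simp
qed

lemma INV_B2: assumes "INV s c M" "M + b = b" shows "INV (s + b) 1 b"
proof -
  have "s + b = b"
  proof (cases "s = M")
    case True then show ?thesis using assms(2) by simp
  next
    case False then have "s = M + M" using INV_s[OF assms(1)] by blast
    then have "s + b = M + (M + b)" by (simp add: add.assoc)
    then show ?thesis using assms(2) by simp
  qed
  then show ?thesis unfolding INV_def by simp
qed

lemma INV_B3: assumes "INV s c M" "M + b = M + M" shows "INV (s + b) c' (M + M)"
proof -
  have "s + b = M + M"
  proof (cases "s = M")
    case True then show ?thesis using assms(2) by simp
  next
    case False then have "s = M + M" using INV_s[OF assms(1)] by blast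
    then have "s + b = M + (M + b)" by (simp add: add.assoc)
    then show ?thesis using assms(2) st_three[of M] by simp
  qed
  moreover have "M + M \<in> nuX" using st_nuidem[of M] nuX_iff by metis
  ultimately show ?thesis unfolding INV_def by simp
qed

lemma part2_inv:
  fixes a :: "nat \<Rightarrow> 'a::supertropical"
  shows "is_ilub (a ` {1..n}) M \<Longrightarrow> INV (sum a {1..n}) (card {i\<in>{1..n}. a i = M}) M"
proof (induction n arbitrary: M)
  case 0
  then have "is_ilub {} M" by simp
  then have "M = 0" using ilub_unique[OF _ ilub_empty] by blast
  then show ?case unfolding INV_def nuX_iff by simp
next
  case (Suc n)
  obtain M0 where lub0: "is_ilub (a ` {1..n}) M0" using ilub_exists by blast
  define b where "b = a (Suc n)"
  define s where "s = sum a {1..n}"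
  define S0 where "S0 = {i\<in>{1..n}. a i = M0}"
  have IH: "INV s (card S0) M0" using Suc.IH[OF lub0] unfolding s_def S0_def .
  have iv: "{1..Suc n} = insert (Suc n) {1..n}" by auto
  have img: "a ` {1..Suc n} = insert b (a ` {1..n})" unfolding iv b_def by simp
  have MM: "M = (if b \<noteq> M0 then b + M0 else b)"
    using ilub_unique[OF Suc.prems[unfolded img] ilub_insert[OF lub0 ilub2[of b M0]]] .
  have sum': "sum a {1..Suc n} = s + b" unfolding s_def b_def by simp
  have fin: "finite S0" unfolding S0_def by simp
  have nS0: "Suc n \<notin> S0" unfolding S0_def by simp
  have S': "{i\<in>{1..Suc n}. a i = M} = {i\<in>{1..n}. a i = M} \<union> (if b = M then {Suc n} else {})"
    unfolding iv b_def by auto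
  show ?case
  proof (cases "b = M0")
    case True
    then have "M = M0" using MM by simp
    then have "{i\<in>{1..Suc n}. a i = M} = insert (Suc n) S0" using S' True unfolding S0_def by auto
    then have "card {i\<in>{1..Suc n}. a i = M} = card S0 + 1" using fin nS0 by simp
    then show ?thesis using INV_A[OF IH] sum' True \<open>M = M0\<close> by simp
  next
    case False
    then have Mb: "M = M0 + b" using MM by (simp add: add.commute)
    consider "M0 + M0 \<noteq> b + b" "M0 + b = M0" | "M0 + M0 \<noteq> b + b" "M0 + b = b" | "M0 + M0 = b + b" "M0 + b = M0 + M0"
      using st_tri[of M0 b] by blast
    then show ?thesis
    proof cases
      case 1
      then have "M = M0" using Mb by simp
      then have "{i\<in>{1..Suc n}. a i = M} = S0" using S' False unfolding S0_def by auto
      then show ?thesis using INV_B1[OF IH 1(2)] sum' \<open>M = M0\<close> by simp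
    next
      case 2
      then have "M = b" using Mb by simp
      have "a i \<noteq> b" if "i \<in> {1..n}" for i
      proof
        assume ai: "a i = b"
        have "ile (a i) M0" using lub0 that unfolding is_ilub_def by blast
        moreover have "ile M0 b" using 2 unfolding ile_def by blast
        ultimately have "b = M0" using ai ile_antisym' by blast
        then show False using False by simp
      qed
      then have "{i\<in>{1..Suc n}. a i = M} = {Suc n}" using S' \<open>M = b\<close> by auto
      then show ?thesis using INV_B2[OF IH 2(2)] sum' \<open>M = b\<close> by simp
    next
      case 3
      then have "M = M0 + M0" using Mb by simp
      then show ?thesis using INV_B3[OF IH 3(2)] sum' by simp
    qed
  qed
qed

lemma card_one_ex1: "finite S \<Longrightarrow> card S = 1 \<longleftrightarrow> (\<exists>!i. i \<in> S)"
proof -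
  have "card S = 1 \<longleftrightarrow> (\<exists>x. S = {x})" using card_1_singleton_iff[of S] by simp
  also have "\<dots> \<longleftrightarrow> (\<exists>!i. i \<in> S)" by blast
  finally show ?thesis .
qed

theorem lemma5p6:
  fixes dummy :: "'a::supertropical"
  shows "(partial_order_on (UNIV :: 'a set) ile_rel
          \<and> (\<forall>A :: 'a set. finite A \<longrightarrow> (\<exists>m. is_ilub A m))
          \<and> is_ilub ({} :: 'a set) 0
          \<and> (\<forall>x y :: 'a. is_ilub {x, y} (if x \<noteq> y then x + y else x)))
       \<and> (\<forall>(n::nat) (a :: nat \<Rightarrow> 'a) M.
            is_ilub (a ` {1..n}) M \<longrightarrow>
            (((\<Sum>i\<in>{1..n}. a i) \<notin> nuX
               \<longleftrightarrow> (M \<notin> nuX \<and> (\<exists>!i. i \<in> {1..n} \<and> a i = M)))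
             \<and> ((M \<notin> nuX \<and> (\<exists>!i. i \<in> {1..n} \<and> a i = M))
               \<longleftrightarrow> (M \<notin> nuX \<and> (\<exists>!i. i \<in> {1..n} \<and> a i = M \<and> M = (\<Sum>i\<in>{1..n}. a i))))))"
proof (intro conjI allI impI)
  show "partial_order_on (UNIV :: 'a set) ile_rel" by (rule part1)
  show "\<exists>m. is_ilub A m" if "finite A" for A :: "'a set" using ilub_exists[OF that] .
  show "is_ilub ({} :: 'a set) 0" by (rule ilub_empty)
  show "is_ilub {x, y} (if x \<noteq> y then x + y else x)" for x y :: 'a by (rule ilub2)
next
  fix n :: nat and a :: "nat \<Rightarrow> 'a" and M
  assume lub: "is_ilub (a ` {1..n}) M"
  define S where "S = {i\<in>{1..n}. a i = M}"
  define s where "s = (\<Sum>i\<in>{1..n}. a i)"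
  have inv: "INV s (card S) M" using part2_inv[OF lub] unfolding s_def S_def .
  have fin: "finite S" unfolding S_def by simp
  have ex1: "(\<exists>!i. i \<in> {1..n} \<and> a i = M) \<longleftrightarrow> card S = 1"
    using card_one_ex1[OF fin] unfolding S_def by simp
  have nn: "M + M \<in> nuX" using st_nuidem[of M] nuX_iff by metis
  have A: "s \<notin> nuX \<longleftrightarrow> (M \<notin> nuX \<and> card S = 1)"
    using inv nn unfolding INV_def by auto
  show "(s \<notin> nuX) = (M \<notin> nuX \<and> (\<exists>!i. i \<in> {1..n} \<and> a i = M))"
    using A ex1 by simp
  have key: "M \<notin> nuX \<Longrightarrow> card S = 1 \<Longrightarrow> s = M" using inv unfolding INV_def by auto
  show "(M \<notin> nuX \<and> (\<exists>!i. i \<in> {1..n} \<and> a i = M)) =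
        (M \<notin> nuX \<and> (\<exists>!i. i \<in> {1..n} \<and> a i = M \<and> M = s))"
  proof
    assume h: "M \<notin> nuX \<and> (\<exists>!i. i \<in> {1..n} \<and> a i = M)"
    then have "M = s" using key ex1 by simp
    then show "M \<notin> nuX \<and> (\<exists>!i. i \<in> {1..n} \<and> a i = M \<and> M = s)" using h by simp
  next
    assume h: "M \<notin> nuX \<and> (\<exists>!i. i \<in> {1..n} \<and> a i = M \<and> M = s)"
    then have "M = s" by blast
    then show "M \<notin> nuX \<and> (\<exists>!i. i \<in> {1..n} \<and> a i = M)" using h by simp
  qed
qed

end
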